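(* Let $K\subset\mathbb{R}^{n+m}$ be a curved convex body. Then for every $u\in W\setminus\{0\}$, $$h_{\Sigma_\pi K}(u)=\int_V\langle u,\nabla h_K(u+\xi)\rangle\, J_{\psi_u}(\xi)\,\mathrm{d}\xi,$$ where $\psi_u:V\to V$ is $\psi_u(\xi)=\pi\big(\nabla h_K(u+\xi)\big)$ and $J_{\psi_u}(\xi)$ is the determinant of the differential of $\psi_u$ at $\xi$.
   Context: A convex body is a non-empty compact convex subset of a real vector space; its support function is $h_L(u)=\max\{\langle u,x\rangle:x\in L\}$. A convex body $K\subset\mathbb{R}^{n+m}$ is curved if $h_K$ is $C^2$ (away from $0$) and the restriction of $\nabla h_K$ to the unit sphere $S^{n+m-1}$ is a $C^1$ diffeomorphism onto its image. Let $V\subset\mathbb{R}^{n+m}$ be a linear subspace of dimension $n$, $W=V^\perp$, $\pi$ the orthogonal projection onto $V$. For $x\in\pi(K)$ let $K_x:=\{y\in W:x+y\in K\}$; a section is $\gamma:\pi(K)\to W$ with $\gamma(x)\in K_x$; the fiber body is $\Sigma_\pi K:=\{\int_{\pi(K)}\gamma(x)\,\mathrm{d}x:\gamma\text{ Borel measurable section}\}\subset W$, $\mathrm{d}x$ Lebesgue measure on $V$. *)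

theory Defs
  imports "HOL-Analysis.Analysis"
begin

definition supp_fun :: "'a::real_inner set \<Rightarrow> 'a \<Rightarrow> real" where
  "supp_fun L u = Sup ((\<lambda>x. inner u x) ` L)"

definition convex_body :: "'a::euclidean_space set \<Rightarrow> bool" where
  "convex_body K \<longleftrightarrow> K \<noteq> {} \<and> compact K \<and> convex K"

text \<open>Gradient of a real-valued function (meaningful where it is differentiable).\<close>
definition grad :: "('a::real_inner \<Rightarrow> real) \<Rightarrow> 'a \<Rightarrow> 'a" where
  "grad h x = (SOME g. GDERIV h x :> g)"

definition C1_on :: "'a::euclidean_space set \<Rightarrow> ('a \<Rightarrow> 'b::euclidean_space) \<Rightarrow> bool" where
  "C1_on U F \<longleftrightarrow> (\<exists>F'. (\<forall>x\<in>U. (F has_derivative blinfun_apply (F' x)) (at x)) \<and> continuous_on U F')"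

definition C1_on_set :: "'a::euclidean_space set \<Rightarrow> ('a \<Rightarrow> 'b::euclidean_space) \<Rightarrow> bool" where
  "C1_on_set A f \<longleftrightarrow> (\<forall>x\<in>A. \<exists>U F. open U \<and> x \<in> U \<and> C1_on U F \<and> (\<forall>y\<in>A \<inter> U. F y = f y))"

definition C1_diffeo_onto_image :: "'a::euclidean_space set \<Rightarrow> ('a \<Rightarrow> 'a) \<Rightarrow> bool" where
  "C1_diffeo_onto_image A f \<longleftrightarrow> inj_on f A \<and> C1_on_set A f \<and> C1_on_set (f ` A) (the_inv_into A f)"

definition curved :: "'a::euclidean_space set \<Rightarrow> bool" where
  "curved K \<longleftrightarrow>
     (\<forall>x. x \<noteq> 0 \<longrightarrow> (\<exists>g. GDERIV (supp_fun K) x :> g))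
   \<and> C1_on (- {0}) (grad (supp_fun K))
   \<and> C1_diffeo_onto_image (sphere 0 1) (grad (supp_fun K))"

definition proj :: "'a::euclidean_space set \<Rightarrow> 'a \<Rightarrow> 'a" where
  "proj V x = (THE y. y \<in> V \<and> x - y \<in> orthogonal_comp V)"

text \<open>Lebesgue measure on the subspace V = range f, where f : R^n \<rightarrow> V is a linear isometry
  (orthonormal frame of V); the result does not depend on the chosen frame.\<close>
definition subspace_lebesgue :: "(real^'n \<Rightarrow> 'a::euclidean_space) \<Rightarrow> 'a measure" where
  "subspace_lebesgue f = distr lborel borel f"

text \<open>Determinant of the differential at xi of a map psi : V \<rightarrow> V, computed in the orthonormal
  coordinates given by f.\<close>
definition subspace_jacobian :: "(real^'n \<Rightarrow> 'a::euclidean_space) \<Rightarrow> ('a \<Rightarrow> 'a) \<Rightarrow> 'a \<Rightarrow> real" where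
  "subspace_jacobian f psi xi = det (jacobian (\<lambda>y. inv f (psi (f y))) (at (inv f xi)))"

definition fiber_body :: "(real^'n \<Rightarrow> 'a::euclidean_space) \<Rightarrow> 'a set \<Rightarrow> 'a set" where
  "fiber_body f K =
     (let V = range f; P = proj V ` K in
      {(\<integral>x\<in>P. gamma x \<partial>subspace_lebesgue f) | gamma.
         gamma \<in> borel_measurable (restrict_space borel P) \<and>
         (\<forall>x\<in>P. gamma x \<in> orthogonal_comp V \<and> x + gamma x \<in> K)})"

end

theory Submission
  imports Defs "HOL-Combinatorics.Permutations" "HOL-Library.Countable"
begin


lemma det_psd_nonneg:
  fixes M :: "real^'n^'n"
  assumes psd: "\<And>d. inner d (M *v d) \<ge> 0"
  shows "det M \<ge> 0"
proof (rule ccontr)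
  assume neg: "\<not> det M \<ge> 0"
  define N where "N t = t *\<^sub>R M + (1 - t) *\<^sub>R (mat 1 :: real^'n^'n)" for t :: real
  define \<phi> where "\<phi> t = det (N t)" for t
  have cont: "continuous_on {0..1} \<phi>"
    unfolding \<phi>_def N_def det_def
    by (intro continuous_intros)
  have Nv: "N t *v d = t *\<^sub>R (M *v d) + (1 - t) *\<^sub>R d" for t d
    unfolding N_def by (simp add: matrix_vector_mult_add_rdistrib scaleR_matrix_vector_assoc
        flip: scaleR_matrix_vector_assoc)
  have nz: "\<phi> t \<noteq> 0" if "0 \<le> t" "t < 1" for t
  proof -
    have "inj ((*v) (N t))"
    proof (rule injI)
      fix x y assume eq: "N t *v x = N t *v y"
      let ?d = "x - y"
      have "N t *v ?d = 0" using eq by (simp add: matrix_vector_mult_diff_distrib)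
      hence "inner ?d (N t *v ?d) = 0" by simp
      hence "t * inner ?d (M *v ?d) + (1 - t) * inner ?d ?d = 0"
        by (simp add: Nv inner_add_right)
      moreover have "t * inner ?d (M *v ?d) \<ge> 0" using psd that by simp
      moreover have "inner ?d ?d \<ge> 0" by simp
      ultimately have "(1 - t) * inner ?d ?d = 0"
        using that by (smt (verit) mult_nonneg_nonneg)
      hence "inner ?d ?d = 0" using that by simp
      thus "x = y" by simp
    qed
    hence "det (matrix ((*v) (N t))) \<noteq> 0"
      by (subst det_nz_iff_inj) (auto simp: matrix_vector_mul_linear)
    thus ?thesis unfolding \<phi>_def by simp
  qed
  have "\<phi> 0 = 1" unfolding \<phi>_def N_def by simp
  moreover have "\<phi> 1 < 0" using neg unfolding \<phi>_def N_def by simp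
  ultimately obtain x where "0 \<le> x" "x \<le> 1" "\<phi> x = 0"
    using IVT2'[of \<phi> 1 0 0] cont by force
  with nz[of x] \<open>\<phi> 1 < 0\<close> show False by (cases "x = 1") auto
qed


lemma supp_bdd:
  assumes "compact K"
  shows "bdd_above ((\<lambda>x. inner v x) ` K)"
proof -
  have "compact ((\<lambda>x. inner v x) ` K)"
    using assms by (intro compact_continuous_image continuous_intros)
  thus ?thesis by (simp add: bounded_imp_bdd_above compact_imp_bounded)
qed

lemma supp_ge:
  assumes "compact K" "z \<in> K"
  shows "inner v z \<le> supp_fun K v"
  unfolding supp_fun_def using supp_bdd[OF assms(1)] assms(2)
  by (intro cSup_upper) auto

lemma supp_eq_max:
  assumes "x \<in> K" "\<forall>z\<in>K. inner v z \<le> inner v x"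
  shows "supp_fun K v = inner v x"
  unfolding supp_fun_def using assms by (intro cSup_eq_maximum) auto

lemma supp_max:
  assumes "compact K" "K \<noteq> {}"
  shows "\<exists>x\<in>K. \<forall>z\<in>K. inner v z \<le> inner v x"
proof -
  have c: "continuous_on K (\<lambda>x. inner v x)" by (intro continuous_intros)
  show ?thesis using continuous_attains_sup[OF assms c] by blast
qed

lemma gderiv_maximizer:
  assumes K: "compact K" and g: "GDERIV (supp_fun K) v :> g"
    and x: "x \<in> K" "\<forall>z\<in>K. inner v z \<le> inner v x"
  shows "g = x"
proof -
  let ?phi = "\<lambda>w. supp_fun K w - inner w x"
  have d: "(?phi has_derivative (\<lambda>d. inner d g - inner d x)) (at v)"
    using g unfolding gderiv_def by (auto intro!: derivative_eq_intros)
  have "?phi v = 0" using supp_eq_max[OF x] by (simp add: inner_commute)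
  moreover have "?phi w \<ge> 0" for w using supp_ge[OF K x(1), of w] by (simp add: inner_commute)
  ultimately have "eventually (\<lambda>w. ?phi v \<le> ?phi w) (at v)" by simp
  from has_derivative_local_min[OF d this]
  have "(\<lambda>d. inner d g - inner d x) = (\<lambda>d. 0)" .
  hence "inner (g - x) g - inner (g - x) x = 0" by metis
  hence "inner (g - x) (g - x) = 0" by (simp add: inner_diff_right)
  thus ?thesis by simp
qed


locale fb_setting =
  fixes K :: "'a::euclidean_space set" and f :: "real^'n \<Rightarrow> 'a" and u :: 'a
  assumes cb: "convex_body K" and cv: "curved K" and lin: "linear f"
    and isom: "\<forall>y. norm (f y) = norm y" and uW: "u \<in> orthogonal_comp (range f)"
    and u0: "u \<noteq> 0"
begin

abbreviation "G \<equiv> grad (supp_fun K)"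
abbreviation "A \<equiv> adjoint f"

lemma Kc: "compact K" and Kne: "K \<noteq> {}" and Kconv: "convex K"
  using cb by (auto simp: convex_body_def)

lemma f_add: "f (x + y) = f x + f y" using lin by (simp add: linear_add)
lemma f_diff: "f (x - y) = f x - f y" using lin by (simp add: linear_diff)
lemma f_scale: "f (c *\<^sub>R x) = c *\<^sub>R f x" using lin by (simp add: linear_scale)
lemma f_0[simp]: "f 0 = 0" using lin by (simp add: linear_0)

lemma f_inner[simp]: "inner (f x) (f y) = inner x y"
proof -
  have "inner (f x) (f y) = ((norm (f x + f y))\<^sup>2 - (norm (f x))\<^sup>2 - (norm (f y))\<^sup>2) / 2"
    by (rule dot_norm)
  also have "\<dots> = ((norm (x + y))\<^sup>2 - (norm x)\<^sup>2 - (norm y)\<^sup>2) / 2"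
    using isom by (simp flip: f_add)
  also have "\<dots> = inner x y" by (rule dot_norm[symmetric])
  finally show ?thesis .
qed

lemma A_lin: "linear A" using lin by (rule adjoint_linear)

lemma inner_f_A: "inner (f x) y = inner x (A y)"
  using adjoint_works[OF lin] by simp

lemma A_f[simp]: "A (f x) = x"
proof -
  have "inner z (A (f x) - x) = 0" for z
    by (simp add: inner_diff_right flip: inner_f_A)
  from this[of "A (f x) - x"] show ?thesis by simp
qed

lemma f_inj: "inj f"
  by (metis A_f injI)

lemma inv_f_f[simp]: "inv f (f y) = y"
  using f_inj by simp

lemma u_orth: "inner u (f y) = 0" "inner (f y) u = 0"
  using uW by (auto simp: orthogonal_comp_def orthogonal_def inner_commute)

lemma A_orth: "w \<in> orthogonal_comp (range f) \<Longrightarrow> A w = 0"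
proof -
  assume w: "w \<in> orthogonal_comp (range f)"
  have "inner z (A w) = 0" for z using w
    by (auto simp: orthogonal_comp_def orthogonal_def simp flip: inner_f_A)
  from this[of "A w"] show ?thesis by simp
qed

lemma A_u[simp]: "A u = 0" using A_orth uW by blast

lemma A_add: "A (x + y) = A x + A y" using A_lin by (simp add: linear_add)
lemma A_diff: "A (x - y) = A x - A y" using A_lin by (simp add: linear_diff)
lemma A_scale: "A (c *\<^sub>R x) = c *\<^sub>R A x" using A_lin by (simp add: linear_scale)

lemma proj_eq: "proj (range f) x = f (A x)"
  unfolding proj_def
proof (rule the_equality)
  show "f (A x) \<in> range f \<and> x - f (A x) \<in> orthogonal_comp (range f)"
    by (auto simp: orthogonal_comp_def orthogonal_def inner_diff_right inner_f_A A_diff)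
next
  fix y assume y: "y \<in> range f \<and> x - y \<in> orthogonal_comp (range f)"
  then obtain z where z: "y = f z" by blast
  have "A (x - y) = 0" using y A_orth by blast
  hence "A x = z" using z by (simp add: A_diff)
  thus "y = f (A x)" using z by simp
qed

lemma norm_f[simp]: "norm (f y) = norm y" using isom by simp

lemma u_plus_nz: "u + f y \<noteq> 0"
proof
  assume "u + f y = 0"
  hence "inner u (u + f y) = 0" by simp
  thus False using u0 by (simp add: inner_add_right u_orth)
qed

lemma nf_zero: "f b + c *\<^sub>R u = 0 \<Longrightarrow> b = 0 \<and> c = 0"
proof -
  assume e: "f b + c *\<^sub>R u = 0"
  hence "inner u (f b + c *\<^sub>R u) = 0" by simp
  hence "c * inner u u = 0" by (simp add: inner_add_right u_orth)
  hence c: "c = 0" using u0 by simp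
  with e have "f b = 0" by simp
  hence "norm b = 0" by (metis norm_f norm_zero)
  with c show ?thesis by simp
qed

lemma G_deriv: "v \<noteq> 0 \<Longrightarrow> GDERIV (supp_fun K) v :> G v"
  using cv unfolding curved_def grad_def by (metis someI_ex)

lemma G_max: assumes "v \<noteq> 0" shows "G v \<in> K" "\<forall>z\<in>K. inner v z \<le> inner v (G v)"
proof -
  obtain x where x: "x \<in> K" "\<forall>z\<in>K. inner v z \<le> inner v x" using supp_max[OF Kc Kne] by blast
  have "G v = x" by (rule gderiv_maximizer[OF Kc G_deriv[OF assms] x])
  thus "G v \<in> K" "\<forall>z\<in>K. inner v z \<le> inner v (G v)" using x by auto
qed

lemma G_unique: "v \<noteq> 0 \<Longrightarrow> x \<in> K \<Longrightarrow> \<forall>z\<in>K. inner v z \<le> inner v x \<Longrightarrow> x = G v"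
  by (metis gderiv_maximizer[OF Kc G_deriv])

lemma G_scale: assumes "v \<noteq> 0" "c > 0" shows "G (c *\<^sub>R v) = G v"
proof -
  have "\<forall>z\<in>K. inner (c *\<^sub>R v) z \<le> inner (c *\<^sub>R v) (G v)"
    using G_max(2)[OF assms(1)] assms(2) by simp
  thus ?thesis using G_unique[of "c *\<^sub>R v" "G v"] G_max(1)[OF assms(1)] assms by simp
qed

lemma G_inj: assumes "a \<noteq> 0" "b \<noteq> 0" "G a = G b"
  shows "a /\<^sub>R norm a = b /\<^sub>R norm b"
proof -
  have inj: "inj_on G (sphere 0 1)"
    using cv unfolding curved_def C1_diffeo_onto_image_def by blast
  have "G (a /\<^sub>R norm a) = G a" using G_scale[OF assms(1), of "1 / norm a"] assms(1) by (simp add: divide_inverse_commute)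
  moreover have "G (b /\<^sub>R norm b) = G b" using G_scale[OF assms(2), of "1 / norm b"] assms(2) by (simp add: divide_inverse_commute)
  ultimately show ?thesis using inj_onD[OF inj] assms by (simp add: norm_divide)
qed

lemma G_mono: assumes "a \<noteq> 0" "b \<noteq> 0" shows "inner (G a - G b) (a - b) \<ge> 0"
proof -
  have 1: "inner a (G b) \<le> inner a (G a)" using G_max[OF assms(1)] G_max(1)[OF assms(2)] by blast
  have 2: "inner b (G a) \<le> inner b (G b)" using G_max[OF assms(2)] G_max(1)[OF assms(1)] by blast
  show ?thesis using 1 2 by (simp add: inner_diff_left inner_diff_right inner_commute)
qed

end


context fb_setting begin

definition "C = A ` K"
definition "FM x y \<longleftrightarrow> y \<in> K \<and> A y = x \<and> (\<forall>k\<in>K. A k = x \<longrightarrow> inner u k \<le> inner u y)"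
definition "ystar x = (THE y. FM x y)"
definition "gmap y = A (G (u + f y))"

lemma inner_nu: "inner (f b + c *\<^sub>R u) k = inner b (A k) + c * inner u k"
  by (simp add: inner_add_left inner_f_A)

lemma FM_exists: assumes "x \<in> C" shows "\<exists>y. FM x y"
proof -
  let ?F = "K \<inter> A -` {x}"
  have "closed (A -` {x})"
    using A_lin by (intro continuous_closed_vimage) (simp_all add: linear_continuous_at linear_conv_bounded_linear)
  hence cF: "compact ?F" using Kc by (intro compact_Int_closed)
  have "?F \<noteq> {}" using assms unfolding C_def by auto
  then obtain y where "y \<in> ?F" "\<forall>z\<in>?F. inner u z \<le> inner u y" using supp_max[OF cF] by blast
  thus ?thesis unfolding FM_def by auto
qed

lemma FM_sep: assumes "FM x y"
  shows "\<exists>b c. c \<ge> 0 \<and> (b \<noteq> 0 \<or> c \<noteq> 0) \<and> (\<forall>k\<in>K. inner (f b + c *\<^sub>R u) k \<le> inner (f b + c *\<^sub>R u) y)"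
proof -
  define M where "M = inner u y"
  define S where "S = {(A k, s) | k s. k \<in> K \<and> s \<le> inner u k}"
  define T where "T = {(x, t) | t. t > M}"
  have cS: "convex S" unfolding S_def convex_def
  proof (clarify)
    fix k1 s1 k2 s2 and a b :: real
    assume h: "k1 \<in> K" "s1 \<le> inner u k1" "k2 \<in> K" "s2 \<le> inner u k2" "0 \<le> a" "0 \<le> b" "a + b = 1"
    have "a *\<^sub>R k1 + b *\<^sub>R k2 \<in> K" using Kconv h unfolding convex_def by blast
    moreover have "a * s1 + b * s2 \<le> inner u (a *\<^sub>R k1 + b *\<^sub>R k2)"
      using h by (simp add: inner_add_right add_mono mult_left_mono)
    moreover have "a *\<^sub>R (A k1, s1) + b *\<^sub>R (A k2, s2) = (A (a *\<^sub>R k1 + b *\<^sub>R k2), a * s1 + b * s2)"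
      by (simp add: A_add A_scale)
    ultimately show "\<exists>k s. a *\<^sub>R (A k1, s1) + b *\<^sub>R (A k2, s2) = (A k, s) \<and> k \<in> K \<and> s \<le> inner u k"
      by blast
  qed
  have cT: "convex T" unfolding T_def convex_def
  proof (clarify)
    fix t1 t2 and a b :: real
    assume h: "M < t1" "M < t2" "0 \<le> a" "0 \<le> b" "a + b = 1"
    have "a * M + b * M < a * t1 + b * t2"
    proof (cases "a = 0")
      case True thus ?thesis using h by simp
    next
      case False
      hence "a * M < a * t1" using h mult_strict_left_mono[of M t1 a] by simp
      moreover have "b * M \<le> b * t2" using h mult_left_mono[of M t2 b] by simp
      ultimately show ?thesis by linarith
    qed
    hence "M < a * t1 + b * t2" using h by (simp add: distrib_right[symmetric])
    moreover have "a *\<^sub>R (x, t1) + b *\<^sub>R (x, t2) = (x, a * t1 + b * t2)"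
      using h by (simp add: scaleR_add_left[symmetric])
    ultimately show "\<exists>t. a *\<^sub>R (x, t1) + b *\<^sub>R (x, t2) = (x, t) \<and> M < t" by blast
  qed
  have yK: "y \<in> K" and Ay: "A y = x" and ymax: "\<forall>k\<in>K. A k = x \<longrightarrow> inner u k \<le> M"
    using assms unfolding FM_def M_def by auto
  have neS: "S \<noteq> {}" using yK unfolding S_def by blast
  have neT: "T \<noteq> {}" unfolding T_def by (auto intro: exI[of _ "M + 1"])
  have disj: "S \<inter> T = {}"
  proof (rule ccontr)
    assume "S \<inter> T \<noteq> {}"
    then obtain k s t where "k \<in> K" "s \<le> inner u k" "(A k, s) = (x, t)" "t > M"
      unfolding S_def T_def by blast
    thus False using ymax by force
  qed
  obtain a b where a: "a \<noteq> 0" and aS: "\<forall>p\<in>S. inner a p \<le> b" and aT: "\<forall>p\<in>T. inner a p \<ge> b"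
    using separating_hyperplane_sets[OF cS cT neS neT disj] by blast
  obtain a1 a2 where a12: "a = (a1, a2)" by (cases a)
  have S': "inner a1 (A k) + a2 * s \<le> b" if "k \<in> K" "s \<le> inner u k" for k s
    using aS that unfolding S_def a12 by auto
  have T': "inner a1 x + a2 * t \<ge> b" if "t > M" for t
    using aT that unfolding T_def a12 by auto
  have a2: "a2 \<ge> 0"
  proof (rule ccontr)
    assume "\<not> a2 \<ge> 0"
    hence neg: "a2 < 0" by simp
    define s where "s = min (inner u y) ((b - inner a1 (A y) + 1) / a2)"
    have "inner a1 (A y) + a2 * s \<le> b" using S'[OF yK] s_def by simp
    moreover have "a2 * s \<ge> b - inner a1 (A y) + 1"
    proof -
      have "s \<le> (b - inner a1 (A y) + 1) / a2" unfolding s_def by simp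
      thus ?thesis using neg by (simp add: neg_le_divide_eq mult.commute)
    qed
    ultimately show False by simp
  qed
  have xM: "inner a1 x + a2 * M \<ge> b"
  proof (rule ccontr)
    assume nx: "\<not> ?thesis"
    define d where "d = b - (inner a1 x + a2 * M)"
    have d: "d > 0" using nx d_def by simp
    have "inner a1 x + a2 * (M + d / (a2 + 1)) \<ge> b" using T' d a2 by simp
    moreover have "a2 * (d / (a2 + 1)) < d" using a2 d by (simp add: field_simps)
    ultimately show False unfolding d_def by (simp add: distrib_left)
  qed
  show ?thesis
  proof (intro exI conjI ballI)
    show "a2 \<ge> 0" by fact
    show "a1 \<noteq> 0 \<or> a2 \<noteq> 0" using a a12 by (auto simp: zero_prod_def)
    fix k assume k: "k \<in> K"
    have "inner a1 (A k) + a2 * inner u k \<le> inner a1 (A y) + a2 * inner u y"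
      using S'[OF k order_refl] xM Ay M_def by simp
    thus "inner (f a1 + a2 *\<^sub>R u) k \<le> inner (f a1 + a2 *\<^sub>R u) y" by (simp add: inner_nu)
  qed
qed

lemma FM_unique: assumes "FM x y1" "FM x y2" shows "y1 = y2"
proof -
  obtain b c where c: "c \<ge> 0" "b \<noteq> 0 \<or> c \<noteq> 0"
    and mx: "\<forall>k\<in>K. inner (f b + c *\<^sub>R u) k \<le> inner (f b + c *\<^sub>R u) y1"
    using FM_sep[OF assms(1)] by blast
  let ?n = "f b + c *\<^sub>R u"
  have n0: "?n \<noteq> 0" using nf_zero c by blast
  have y1: "y1 \<in> K" "A y1 = x" and y2: "y2 \<in> K" "A y2 = x"
    using assms unfolding FM_def by auto
  have "inner u y2 \<le> inner u y1" using assms(1) y2 unfolding FM_def by blast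
  moreover have "inner u y1 \<le> inner u y2" using assms(2) y1 unfolding FM_def by blast
  ultimately have "inner u y1 = inner u y2" by simp
  hence "inner ?n y2 = inner ?n y1" using y1 y2 by (simp add: inner_nu)
  hence mx2: "\<forall>k\<in>K. inner ?n k \<le> inner ?n y2" using mx by simp
  show ?thesis using G_unique[OF n0 y1(1) mx] G_unique[OF n0 y2(1) mx2] by simp
qed

lemma ystar: assumes "x \<in> C" shows "FM x (ystar x)"
  using FM_exists[OF assms] FM_unique unfolding ystar_def by (metis theI)

lemma ystar_eq: "FM x y \<Longrightarrow> ystar x = y"
  using FM_unique unfolding ystar_def by blast

lemma FM_G: "FM (gmap y) (G (u + f y))"
proof -
  let ?v = "u + f y"
  have v0: "?v \<noteq> 0" by (rule u_plus_nz)
  note mx = G_max[OF v0]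
  show ?thesis unfolding FM_def gmap_def
  proof (intro conjI ballI impI)
    show "G ?v \<in> K" using mx by blast
    show "A (G ?v) = A (G ?v)" ..
    fix k assume k: "k \<in> K" "A k = A (G ?v)"
    have "inner ?v k \<le> inner ?v (G ?v)" using mx k by blast
    moreover have "inner (f y) k = inner (f y) (G ?v)" using k by (simp add: inner_f_A)
    ultimately show "inner u k \<le> inner u (G ?v)" by (simp add: inner_add_left)
  qed
qed

lemma gmap_C: "gmap y \<in> C"
proof -
  have "G (u + f y) \<in> K" "A (G (u + f y)) = gmap y" using FM_G unfolding FM_def by auto
  thus ?thesis unfolding C_def by (metis imageI)
qed

lemma ystar_gmap: "ystar (gmap y) = G (u + f y)"
  using ystar_eq[OF FM_G] .

lemma gmap_inj: "inj gmap"
proof (rule injI)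
  fix y1 y2 assume e: "gmap y1 = gmap y2"
  let ?v1 = "u + f y1" and ?v2 = "u + f y2"
  have "G ?v1 = G ?v2" using ystar_gmap e by metis
  hence n: "?v1 /\<^sub>R norm ?v1 = ?v2 /\<^sub>R norm ?v2" using G_inj u_plus_nz by blast
  hence "inner u (?v1 /\<^sub>R norm ?v1) = inner u (?v2 /\<^sub>R norm ?v2)" by simp
  hence "inner u u / norm ?v1 = inner u u / norm ?v2" by (simp add: inner_add_right u_orth)
  hence "norm ?v1 = norm ?v2" using u0 by (simp add: field_simps)
  hence "?v1 = ?v2" using n u_plus_nz by (metis divideR_right norm_eq_zero)
  hence "f y1 = f y2" by simp
  thus "y1 = y2" using f_inj by (simp add: inj_eq)
qed

lemma interior_C_gmap: assumes "x \<in> interior C" shows "x \<in> range gmap"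
proof -
  have xC: "x \<in> C" using assms interior_subset by blast
  let ?y = "ystar x"
  have F: "FM x ?y" by (rule ystar[OF xC])
  obtain b c where c: "c \<ge> 0" "b \<noteq> 0 \<or> c \<noteq> 0"
    and mx: "\<forall>k\<in>K. inner (f b + c *\<^sub>R u) k \<le> inner (f b + c *\<^sub>R u) ?y"
    using FM_sep[OF F] by blast
  have yK: "?y \<in> K" and Ay: "A ?y = x" using F unfolding FM_def by auto
  have cpos: "c > 0"
  proof (rule ccontr)
    assume "\<not> c > 0"
    hence c0: "c = 0" using c by simp
    hence b0: "b \<noteq> 0" using c by simp
    have bC: "inner b z \<le> inner b x" if "z \<in> C" for z
    proof -
      obtain k where k: "k \<in> K" "z = A k" using \<open>z \<in> C\<close> unfolding C_def by blast
      have "inner (f b) k \<le> inner (f b) ?y" using mx k c0 by simp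
      thus ?thesis using k Ay by (simp add: inner_f_A)
    qed
    obtain e where e: "e > 0" "ball x e \<subseteq> C" using assms by (meson mem_interior)
    let ?z = "x + (e / (2 * norm b)) *\<^sub>R b"
    have "dist x ?z < e" using e b0 by (simp add: dist_norm)
    hence "?z \<in> C" using e by auto
    hence "inner b ?z \<le> inner b x" by (rule bC)
    moreover have "inner b ?z = inner b x + e / (2 * norm b) * (norm b)^2"
      by (simp add: inner_add_right power2_norm_eq_inner)
    moreover have "e / (2 * norm b) * (norm b)^2 > 0" using e b0 by simp
    ultimately show False by simp
  qed
  let ?v = "u + f (b /\<^sub>R c)"
  have v: "(1 / c) *\<^sub>R (f b + c *\<^sub>R u) = ?v" using cpos
    by (simp add: f_scale scaleR_add_right divide_inverse_commute)
  have "\<forall>k\<in>K. inner ?v k \<le> inner ?v ?y"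
  proof
    fix k assume "k \<in> K"
    hence "inner ((1/c) *\<^sub>R (f b + c *\<^sub>R u)) k \<le> inner ((1/c) *\<^sub>R (f b + c *\<^sub>R u)) ?y"
      using mx cpos by (simp add: divide_right_mono)
    thus "inner ?v k \<le> inner ?v ?y" by (simp only: v)
  qed
  hence "?y = G ?v" using G_unique[OF u_plus_nz yK] by blast
  hence "gmap (b /\<^sub>R c) = x" using Ay unfolding gmap_def by simp
  thus ?thesis by blast
qed

end


context fb_setting begin

definition "nc n \<longleftrightarrow> norm n = 1 \<and> inner n u \<ge> 0 \<and> n = f (A n) + (inner n u / inner u u) *\<^sub>R u"
definition "Tset = {p. fst (snd p) \<in> K \<and> A (fst (snd p)) = fst p \<and> nc (snd (snd p)) \<and>
     (\<forall>z. z \<in> K \<longrightarrow> inner (snd (snd p)) z \<le> inner (snd (snd p)) (fst (snd p)))}"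

lemma A_cont: "continuous_on S A"
  using A_lin by (simp add: linear_continuous_on linear_conv_bounded_linear)

lemma f_cont: "continuous_on S f"
  using lin by (simp add: linear_continuous_on linear_conv_bounded_linear)

lemma C_compact: "compact C"
  unfolding C_def by (intro compact_continuous_image A_cont Kc)

lemma C_convex: "convex C"
  unfolding C_def by (intro convex_linear_image A_lin Kconv)

lemma C_ne: "C \<noteq> {}" using Kne unfolding C_def by simp

lemma Tset_closed: "closed Tset"
proof -
  have c1: "closed {p :: (real^'n) \<times> 'a \<times> 'a. fst (snd p) \<in> K}"
    using closed_vimage[of K "\<lambda>p :: (real^'n) \<times> 'a \<times> 'a. fst (snd p)"] compact_imp_closed[OF Kc]
    by (simp add: vimage_def continuous_intros)
  have c2: "closed {p :: (real^'n) \<times> 'a \<times> 'a. A (fst (snd p)) = fst p}"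
    by (intro closed_Collect_eq continuous_on_compose2[OF A_cont] continuous_intros) auto
  have c3: "closed {p :: (real^'n) \<times> 'a \<times> 'a. nc (snd (snd p))}"
    unfolding nc_def using u0
    by (intro closed_Collect_conj closed_Collect_eq closed_Collect_le
        continuous_on_compose2[OF A_cont] continuous_on_compose2[OF f_cont] continuous_intros) auto
  have c4: "closed {p :: (real^'n) \<times> 'a \<times> 'a. \<forall>z. z \<in> K \<longrightarrow> inner (snd (snd p)) z \<le> inner (snd (snd p)) (fst (snd p))}"
    by (intro closed_Collect_all closed_Collect_imp closed_Collect_le continuous_intros) auto
  have "Tset = {p. fst (snd p) \<in> K} \<inter> {p. A (fst (snd p)) = fst p} \<inter> {p. nc (snd (snd p))} \<inter>
     {p. \<forall>z. z \<in> K \<longrightarrow> inner (snd (snd p)) z \<le> inner (snd (snd p)) (fst (snd p))}"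
    unfolding Tset_def by auto
  thus ?thesis using c1 c2 c3 c4 by (simp add: closed_Int)
qed

lemma Tset_compact: "compact Tset"
proof -
  have "Tset \<subseteq> C \<times> K \<times> cball 0 1"
    unfolding Tset_def nc_def C_def by auto
  hence "Tset = (C \<times> K \<times> cball 0 1) \<inter> Tset" by blast
  moreover have "compact (C \<times> K \<times> cball (0::'a) 1)"
    using compact_Times[OF C_compact compact_Times[OF Kc compact_cball[of "0::'a" 1]]] .
  ultimately show ?thesis using Tset_closed by (metis compact_Int_closed)
qed

lemma graph_eq: "(\<lambda>x. (x, ystar x)) ` C = (\<lambda>p. (fst p, fst (snd p))) ` Tset"
proof (intro equalityI subsetI)
  fix q assume "q \<in> (\<lambda>x. (x, ystar x)) ` C"
  then obtain x where xC: "x \<in> C" and q: "q = (x, ystar x)" by blast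
  let ?y = "ystar x"
  have F: "FM x ?y" by (rule ystar[OF xC])
  obtain b c where c: "c \<ge> 0" "b \<noteq> 0 \<or> c \<noteq> 0"
    and mx: "\<forall>k\<in>K. inner (f b + c *\<^sub>R u) k \<le> inner (f b + c *\<^sub>R u) ?y"
    using FM_sep[OF F] by blast
  let ?mm = "f b + c *\<^sub>R u"
  have n0: "?mm \<noteq> 0" using nf_zero c by blast
  let ?n = "?mm /\<^sub>R norm ?mm"
  have An0: "A ?mm = b" by (simp add: A_scale A_add)
  have "A ?n = A ?mm /\<^sub>R norm ?mm" by (rule A_scale)
  hence An: "A ?n = b /\<^sub>R norm ?mm" using An0 by simp
  have nu: "inner ?n u = c * inner u u / norm ?mm"
    by (simp add: inner_add_left u_orth divide_inverse_commute)
  have "nc ?n"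
    unfolding nc_def
  proof (intro conjI)
    show "norm ?n = 1" using n0 by simp
    show "inner ?n u \<ge> 0" using nu c by simp
    show "?n = f (A ?n) + (inner ?n u / inner u u) *\<^sub>R u"
      unfolding An nu using u0 by (simp add: f_scale scaleR_add_right divide_inverse_commute)
  qed
  moreover have "\<forall>z. z \<in> K \<longrightarrow> inner ?n z \<le> inner ?n ?y"
    using mx by (simp add: mult_left_mono)
  moreover have "?y \<in> K" "A ?y = x" using F unfolding FM_def by auto
  ultimately have "(x, ?y, ?n) \<in> Tset" unfolding Tset_def by simp
  thus "q \<in> (\<lambda>p. (fst p, fst (snd p))) ` Tset" unfolding q by force
next
  fix q assume "q \<in> (\<lambda>p. (fst p, fst (snd p))) ` Tset"
  then obtain x y n where T: "(x, y, n) \<in> Tset" and q: "q = (x, y)" by force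
  have yK: "y \<in> K" and Ay: "A y = x" and ncn: "nc n" and mx: "\<forall>z\<in>K. inner n z \<le> inner n y"
    using T unfolding Tset_def by auto
  define c where "c = inner n u / inner u u"
  define b where "b = A n"
  have c0: "c \<ge> 0" using ncn u0 unfolding nc_def c_def by simp
  have n: "n = f b + c *\<^sub>R u" using ncn unfolding nc_def b_def c_def by simp
  have n0: "n \<noteq> 0" using ncn unfolding nc_def by auto
  have xC: "x \<in> C" using yK Ay unfolding C_def by blast
  have "FM x y" unfolding FM_def
  proof (intro conjI ballI impI)
    show "y \<in> K" "A y = x" by fact+
    fix k assume k: "k \<in> K" "A k = x"
    have le: "inner b x + c * inner u k \<le> inner b x + c * inner u y"
    proof -
      have "inner n k \<le> inner n y" using mx k by blast
      thus ?thesis using k Ay by (simp add: n inner_nu)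
    qed
    show "inner u k \<le> inner u y"
    proof (cases "c = 0")
      case False thus ?thesis using le c0 by simp
    next
      case True
      have "inner n k = inner n y" using True k Ay by (simp add: n inner_f_A)
      hence "\<forall>z\<in>K. inner n z \<le> inner n k" using mx by simp
      hence "k = G n" using G_unique[OF n0 k(1)] by blast
      moreover have "y = G n" using G_unique[OF n0 yK mx] .
      ultimately show ?thesis by simp
    qed
  qed
  hence "y = ystar x" using ystar_eq by simp
  thus "q \<in> (\<lambda>x. (x, ystar x)) ` C" using xC q by blast
qed

lemma ystar_cont: "continuous_on C ystar"
proof (rule continuous_from_closed_graph[OF Kc])
  show "ystar \<in> C \<rightarrow> K" using ystar unfolding FM_def by blast
  have "compact ((\<lambda>p. (fst p, fst (snd p))) ` Tset)"
    by (intro compact_continuous_image Tset_compact continuous_intros)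
  thus "closed ((\<lambda>x. (x, ystar x)) ` C)" unfolding graph_eq by (rule compact_imp_closed)
qed

end


context fb_setting begin

definition "DG = (SOME F'. (\<forall>x\<in>-{0}. (G has_derivative blinfun_apply (F' x)) (at x)) \<and> continuous_on (-{0}) F')"

lemma DG: "x \<noteq> 0 \<Longrightarrow> (G has_derivative blinfun_apply (DG x)) (at x)"
  and DG_cont: "continuous_on (-{0}) DG"
proof -
  have ex: "\<exists>F'. (\<forall>x\<in>-{0}. (G has_derivative blinfun_apply (F' x)) (at x)) \<and> continuous_on (-{0}) F'"
    using cv unfolding curved_def C1_on_def by blast
  have "(\<forall>x\<in>-{0}. (G has_derivative blinfun_apply (DG x)) (at x)) \<and> continuous_on (-{0}) DG"
    unfolding DG_def by (rule someI_ex[OF ex])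
  thus "x \<noteq> 0 \<Longrightarrow> (G has_derivative blinfun_apply (DG x)) (at x)" "continuous_on (-{0}) DG" by auto
qed

lemma G_cont: "continuous_on (-{0}) G"
proof -
  have "\<forall>x\<in>-{0}. isCont G x" using DG has_derivative_continuous by blast
  thus ?thesis by (simp add: continuous_at_imp_continuous_on)
qed

lemma DG_psd: assumes p: "p \<noteq> 0" shows "inner w (blinfun_apply (DG p) w) \<ge> 0"
proof (rule ccontr)
  assume neg: "\<not> ?thesis"
  hence w0: "w \<noteq> 0" by auto
  define \<phi> where "\<phi> t = inner (G (p + t *\<^sub>R w) - G p) w" for t :: real
  have d1: "((\<lambda>t. p + t *\<^sub>R w) has_derivative (\<lambda>t. t *\<^sub>R w)) (at 0)"
    by (auto intro!: derivative_eq_intros)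
  have d2: "(G has_derivative blinfun_apply (DG p)) (at ((\<lambda>t::real. p + t *\<^sub>R w) 0))"
    using DG[OF p] by simp
  have d3: "((\<lambda>t. G (p + t *\<^sub>R w)) has_derivative (\<lambda>t. blinfun_apply (DG p) (t *\<^sub>R w))) (at 0)"
    using has_derivative_compose[OF d1 d2] by (simp add: o_def)
  have d4: "(\<phi> has_derivative (\<lambda>t. inner (blinfun_apply (DG p) (t *\<^sub>R w)) w)) (at 0)"
    unfolding \<phi>_def by (auto intro!: derivative_eq_intros d3)
  have "(\<lambda>t. inner (blinfun_apply (DG p) (t *\<^sub>R w)) w) = (\<lambda>t. inner w (blinfun_apply (DG p) w) * t)"
    by (auto simp: blinfun.scaleR_right inner_commute)
  hence "DERIV \<phi> 0 :> inner w (blinfun_apply (DG p) w)"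
    using d4 by (simp add: has_field_derivative_def)
  then obtain d where d: "d > 0" "\<forall>h>0. h < d \<longrightarrow> \<phi> (0 + h) < \<phi> 0"
    using DERIV_neg_dec_right neg by (metis not_le)
  define h where "h = min (d / 2) (norm p / (2 * norm w))"
  have h: "h > 0" "h < d" using d p w0 unfolding h_def by auto
  have "h \<le> norm p / (2 * norm w)" unfolding h_def by simp
  hence "h * norm w \<le> norm p / 2" using w0 by (simp add: field_simps)
  moreover have "norm p > 0" using p by simp
  moreover have "norm (h *\<^sub>R w) = h * norm w" using h by simp
  ultimately have "norm (h *\<^sub>R w) < norm p" by linarith
  hence ph: "p + h *\<^sub>R w \<noteq> 0" by (metis add.commute add_eq_0_iff norm_minus_cancel order_less_irrefl)
  have "inner (G (p + h *\<^sub>R w) - G p) ((p + h *\<^sub>R w) - p) \<ge> 0" by (rule G_mono[OF ph p])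
  hence "h * \<phi> h \<ge> 0" unfolding \<phi>_def by (simp add: inner_commute)
  hence "\<phi> h \<ge> 0" using h by (simp add: zero_le_mult_iff)
  moreover have "\<phi> h < 0" using d h by (simp add: \<phi>_def)
  ultimately show False by simp
qed

definition "gd y = (\<lambda>d. A (blinfun_apply (DG (u + f y)) (f d)))"

lemma gmap_deriv: "(gmap has_derivative gd y) (at y)"
proof -
  have d1: "((\<lambda>y. u + f y) has_derivative f) (at y)"
    using linear_imp_has_derivative[OF lin] by (auto intro!: derivative_eq_intros)
  have d2: "(G has_derivative blinfun_apply (DG (u + f y))) (at ((\<lambda>y. u + f y) y))"
    using DG[OF u_plus_nz] by simp
  have d3: "((\<lambda>y. G (u + f y)) has_derivative (\<lambda>d. blinfun_apply (DG (u + f y)) (f d))) (at y)"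
    using has_derivative_compose[OF d1 d2] by (simp add: o_def)
  have "((\<lambda>y. A (G (u + f y))) has_derivative (\<lambda>d. A (blinfun_apply (DG (u + f y)) (f d)))) (at y)"
    using has_derivative_compose[OF d3 linear_imp_has_derivative[OF A_lin]] by (simp add: o_def)
  thus ?thesis unfolding gmap_def gd_def .
qed

lemma gd_linear: "linear (gd y)" using gmap_deriv has_derivative_linear by blast

lemma jac_gmap: "jacobian gmap (at y) = matrix (gd y)"
  unfolding jacobian_def using frechet_derivative_at[OF gmap_deriv] by simp

lemma det_gd_nonneg: "det (matrix (gd y)) \<ge> 0"
proof (rule det_psd_nonneg)
  fix d
  have "matrix (gd y) *v d = gd y d" using matrix_vector_mul(2)[OF gd_linear] by metis
  moreover have "inner d (gd y d) = inner (f d) (blinfun_apply (DG (u + f y)) (f d))"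
    unfolding gd_def by (simp add: inner_f_A)
  ultimately show "inner d (matrix (gd y) *v d) \<ge> 0" using DG_psd[OF u_plus_nz] by simp
qed

lemma det_gd_cont: "continuous_on UNIV (\<lambda>y. det (matrix (gd y)))"
proof -
  have c: "continuous_on UNIV (\<lambda>y. DG (u + f y))"
    by (rule continuous_on_compose2[OF DG_cont]) (auto intro!: continuous_intros f_cont simp: u_plus_nz)
  have ce: "continuous_on UNIV (\<lambda>y. gd y (axis j 1) $ i)" for i j
    unfolding gd_def
    by (intro continuous_intros continuous_on_compose2[OF A_cont] c) auto
  show ?thesis
    unfolding det_def matrix_def by (simp add: vec_lambda_beta) (intro continuous_intros ce)
qed

end


context fb_setting begin

abbreviation "mu \<equiv> subspace_lebesgue f"
definition "PP = proj (range f) ` K"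
definition "gs x = ystar (A x) - x"
definition "Hc y = inner u (ystar y)"
definition "adm \<gamma> \<longleftrightarrow> \<gamma> \<in> borel_measurable (restrict_space borel PP) \<and>
         (\<forall>x\<in>PP. \<gamma> x \<in> orthogonal_comp (range f) \<and> x + \<gamma> x \<in> K)"

lemma PP_eq: "PP = f ` C"
  unfolding PP_def C_def proj_eq by (simp add: image_image)

lemma f_in_PP: "f y \<in> PP \<longleftrightarrow> y \<in> C"
  unfolding PP_eq using f_inj by (auto simp: inj_image_mem_iff)

lemma PP_A: "x \<in> PP \<Longrightarrow> f (A x) = x \<and> A x \<in> C"
  unfolding PP_eq by auto

lemma PP_compact: "compact PP"
  unfolding PP_eq by (intro compact_continuous_image f_cont C_compact)

lemma PP_borel[measurable]: "PP \<in> sets borel"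
  using PP_compact by (simp add: compact_imp_closed borel_closed)

lemma C_borel[measurable]: "C \<in> sets borel"
  using C_compact by (simp add: compact_imp_closed borel_closed)

lemma A_norm: "norm (A z) \<le> norm z"
proof -
  have "(norm (A z))^2 = inner (f (A z)) z" by (simp add: inner_f_A power2_norm_eq_inner)
  also have "\<dots> \<le> norm (f (A z)) * norm z" by (rule norm_cauchy_schwarz)
  also have "\<dots> = norm (A z) * norm z" by simp
  finally have "norm (A z) * norm (A z) \<le> norm (A z) * norm z" by (simp add: power2_eq_square)
  thus ?thesis by (cases "norm (A z) = 0") (auto simp: mult_le_cancel_left)
qed

lemma K_bound: obtains B where "B \<ge> 0" "\<And>k. k \<in> K \<Longrightarrow> norm k \<le> B"
proof -
  obtain B where "\<forall>k\<in>K. norm k \<le> B" using compact_imp_bounded[OF Kc] bounded_iff by blast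
  moreover have "B \<ge> 0" using calculation Kne by (meson ex_in_conv norm_ge_zero order_trans)
  ultimately show ?thesis using that by blast
qed

lemma mu_sets[simp, measurable_cong]: "sets mu = sets borel"
  unfolding subspace_lebesgue_def by simp

lemma f_meas[measurable]: "f \<in> borel_measurable borel"
  using f_cont by (simp add: borel_measurable_continuous_onI)

lemma f_meas_lborel[measurable]: "f \<in> lborel \<rightarrow>\<^sub>M borel"
  using f_meas by (simp add: measurable_lborel1)

lemma mu_PP_finite: "emeasure mu PP < \<infinity>"
proof -
  have "f -` PP = C" using f_in_PP by auto
  thus ?thesis unfolding subspace_lebesgue_def
    using emeasure_compact_finite[OF C_compact] by (simp add: emeasure_distr)
qed

lemma adm_bound: assumes "adm \<gamma>" "B \<ge> 0" "\<And>k. k \<in> K \<Longrightarrow> norm k \<le> B"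
  shows "\<forall>x\<in>PP. norm (\<gamma> x) \<le> 2 * B"
proof
  fix x assume x: "x \<in> PP"
  have k: "x + \<gamma> x \<in> K" using assms x unfolding adm_def by blast
  obtain k' where "k' \<in> K" "x = f (A k')" using x unfolding PP_def proj_eq by blast
  hence "norm x \<le> B" using A_norm assms(3) by (metis norm_f order_trans)
  moreover have "norm (x + \<gamma> x) \<le> B" using assms(3) k by blast
  moreover have "norm (\<gamma> x) \<le> norm (x + \<gamma> x) + norm x"
    by (metis add_diff_cancel_left' norm_triangle_ineq4)
  ultimately show "norm (\<gamma> x) \<le> 2 * B" by simp
qed

lemma adm_integrable: assumes "adm \<gamma>" shows "set_integrable mu PP \<gamma>"
proof -
  obtain B where B: "B \<ge> 0" "\<And>k. k \<in> K \<Longrightarrow> norm k \<le> B" using K_bound by blast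
  have m: "(\<lambda>x. indicator PP x *\<^sub>R \<gamma> x) \<in> borel_measurable borel"
    using assms unfolding adm_def by (subst borel_measurable_restrict_space_iff[symmetric]) auto
  show ?thesis unfolding set_integrable_def
  proof (rule integrableI_bounded_set[where A=PP and B="2*B"])
    show "PP \<in> sets mu" by simp
    show "(\<lambda>x. indicator PP x *\<^sub>R \<gamma> x) \<in> borel_measurable mu" using m by simp
    show "emeasure mu PP < \<infinity>" by (rule mu_PP_finite)
    show "AE x in mu. x \<in> PP \<longrightarrow> norm (indicator PP x *\<^sub>R \<gamma> x) \<le> 2 * B"
      using adm_bound[OF assms B] by auto
    show "AE x in mu. x \<notin> PP \<longrightarrow> indicator PP x *\<^sub>R \<gamma> x = 0" by auto
  qed
qed

lemma gs_cont: "continuous_on PP gs"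
proof -
  have "continuous_on PP (\<lambda>x. ystar (A x))"
    by (rule continuous_on_compose2[OF ystar_cont A_cont]) (use PP_A in blast)
  thus ?thesis unfolding gs_def by (intro continuous_intros)
qed

lemma gs_adm: "adm gs"
  unfolding adm_def
proof (intro conjI ballI)
  show "gs \<in> borel_measurable (restrict_space borel PP)"
    by (rule borel_measurable_continuous_on_restrict[OF gs_cont])
  fix x assume x: "x \<in> PP"
  have F: "FM (A x) (ystar (A x))" using ystar PP_A x by blast
  hence Ay: "A (ystar (A x)) = A x" and yK: "ystar (A x) \<in> K" unfolding FM_def by auto
  show "x + gs x \<in> K" unfolding gs_def using yK by simp
  show "gs x \<in> orthogonal_comp (range f)"
    unfolding orthogonal_comp_def orthogonal_def gs_def
    using Ay by (auto simp: inner_diff_right inner_f_A A_diff)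
qed

lemma adm_le: assumes "adm \<gamma>" "x \<in> PP" shows "inner u (\<gamma> x) \<le> inner u (gs x)"
proof -
  have k: "x + \<gamma> x \<in> K" and o: "\<gamma> x \<in> orthogonal_comp (range f)"
    using assms unfolding adm_def by auto
  have xx: "f (A x) = x" "A x \<in> C" using PP_A assms(2) by auto
  have F: "FM (A x) (ystar (A x))" using ystar xx by blast
  have "A (x + \<gamma> x) = A x" using A_orth[OF o] by (simp add: A_add)
  hence "inner u (x + \<gamma> x) \<le> inner u (ystar (A x))" using F k unfolding FM_def by blast
  moreover have "inner u x = 0" using xx u_orth by metis
  ultimately show ?thesis unfolding gs_def by (simp add: inner_add_right inner_diff_right)
qed

lemma inner_set_integral: assumes "set_integrable mu PP \<gamma>"
  shows "inner u (LINT x:PP|mu. \<gamma> x) = (LINT x:PP|mu. inner u (\<gamma> x))"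
  using assms unfolding set_lebesgue_integral_def set_integrable_def
  by (simp add: inner_scaleR_right flip: integral_inner_right)

lemma LHS_val: "supp_fun (fiber_body f K) u = (LINT x:PP|mu. inner u (gs x))"
proof -
  have fb: "fiber_body f K = {(LINT x:PP|mu. \<gamma> x) | \<gamma>. adm \<gamma>}"
    unfolding fiber_body_def Let_def adm_def PP_def[symmetric] by simp
  have int_ad: "set_integrable mu PP (\<lambda>x. inner u (\<gamma> x))" if "adm \<gamma>" for \<gamma>
  proof -
    have "integrable mu (\<lambda>x. inner u (indicator PP x *\<^sub>R \<gamma> x))"
      by (rule integrable_inner_right) (use adm_integrable[OF that] in \<open>simp add: set_integrable_def\<close>)
    thus ?thesis by (simp add: set_integrable_def inner_scaleR_right)
  qed
  show ?thesis unfolding supp_fun_def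
  proof (rule cSup_eq_maximum)
    show "(LINT x:PP|mu. inner u (gs x)) \<in> inner u ` fiber_body f K"
    proof -
      have "(LINT x:PP|mu. gs x) \<in> {(LINT x:PP|mu. \<gamma> x) | \<gamma>. adm \<gamma>}" using gs_adm by blast
      hence "inner u (LINT x:PP|mu. gs x) \<in> inner u ` fiber_body f K" unfolding fb by blast
      thus ?thesis using inner_set_integral[OF adm_integrable[OF gs_adm]] by simp
    qed
    fix z assume "z \<in> inner u ` fiber_body f K"
    then obtain \<gamma> where ad: "adm \<gamma>" and z: "z = inner u (LINT x:PP|mu. \<gamma> x)" unfolding fb by blast
    have "z = (LINT x:PP|mu. inner u (\<gamma> x))" using z inner_set_integral[OF adm_integrable[OF ad]] by simp
    also have "\<dots> \<le> (LINT x:PP|mu. inner u (gs x))"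
      by (rule set_integral_mono[OF int_ad[OF ad] int_ad[OF gs_adm]]) (rule adm_le[OF ad])
    finally show "z \<le> (LINT x:PP|mu. inner u (gs x))" .
  qed
qed

lemma Hc_cont: "continuous_on C Hc"
  unfolding Hc_def by (intro continuous_intros ystar_cont)

lemma Hc_int: "set_integrable lborel C Hc"
  unfolding set_integrable_def by (rule borel_integrable_compact[OF C_compact Hc_cont])

lemma LHS_val2: "(LINT x:PP|mu. inner u (gs x)) = (LINT y:C|lborel. Hc y)"
proof -
  have m: "(\<lambda>x. indicator PP x *\<^sub>R inner u (gs x)) \<in> borel_measurable borel"
    by (intro borel_measurable_continuous_on_indicator PP_borel continuous_intros gs_cont)
  have "(LINT x:PP|mu. inner u (gs x)) = (\<integral>y. indicator PP (f y) *\<^sub>R inner u (gs (f y)) \<partial>lborel)"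
    unfolding set_lebesgue_integral_def subspace_lebesgue_def
    by (rule integral_distr[OF f_meas_lborel m])
  also have "\<dots> = (\<integral>y. indicator C y *\<^sub>R Hc y \<partial>lborel)"
    by (rule Bochner_Integration.integral_cong)
       (auto simp: f_in_PP indicator_def gs_def Hc_def inner_diff_right u_orth)
  finally show ?thesis unfolding set_lebesgue_integral_def .
qed

end


lemma inv_out: "\<xi> \<notin> range f \<Longrightarrow> inv f \<xi> = (SOME y. False)"
proof -
  assume "\<xi> \<notin> range f"
  hence "(\<lambda>y. y \<in> UNIV \<and> f y = \<xi>) = (\<lambda>y. False)" by auto
  thus ?thesis unfolding inv_into_def by simp
qed

context fb_setting begin

definition "Dt y = det (matrix (gd y))"
definition "FF \<xi> = inner u (G (u + \<xi>)) * subspace_jacobian f (\<lambda>\<xi>. proj (range f) (G (u + \<xi>))) \<xi>"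

lemma gfun_eq: "(\<lambda>y. inv f (proj (range f) (G (u + f y)))) = gmap"
  by (auto simp: proj_eq gmap_def)

lemma FF_eq: "FF \<xi> = inner u (G (u + \<xi>)) * Dt (inv f \<xi>)"
  unfolding FF_def subspace_jacobian_def gfun_eq jac_gmap Dt_def ..

lemma range_f_closed: "closed (range f)"
proof -
  have "range f = {x. f (A x) = x}" by (auto, metis rangeI)
  moreover have "closed {x. f (A x) = x}"
    by (intro closed_Collect_eq continuous_on_compose2[OF f_cont A_cont] continuous_intros) auto
  ultimately show ?thesis by simp
qed

lemma G_meas: "G \<in> borel_measurable borel"
  by (rule borel_measurable_continuous_countable_exceptions[of "{0}"]) (use G_cont in auto)

lemma Gu_meas: "(\<lambda>\<xi>. inner u (G (u + \<xi>))) \<in> borel_measurable borel"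
proof -
  have "(\<lambda>\<xi>. G (u + \<xi>)) \<in> borel_measurable borel"
    using measurable_compose[OF _ G_meas, of "\<lambda>\<xi>. u + \<xi>"] by simp
  thus ?thesis by measurable
qed

lemma Dt_cont: "continuous_on UNIV Dt"
  unfolding Dt_def by (rule det_gd_cont)

lemma FF_meas: "FF \<in> borel_measurable borel"
proof -
  have eq: "FF = (\<lambda>\<xi>. if \<xi> \<in> range f then inner u (G (u + \<xi>)) * Dt (A \<xi>)
                    else inner u (G (u + \<xi>)) * Dt (SOME y. False))"
  proof
    fix \<xi> show "FF \<xi> = (if \<xi> \<in> range f then inner u (G (u + \<xi>)) * Dt (A \<xi>)
                    else inner u (G (u + \<xi>)) * Dt (SOME y. False))"
    proof (cases "\<xi> \<in> range f")
      case True then obtain y where "\<xi> = f y" by blast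
      thus ?thesis by (simp add: FF_eq)
    qed (simp add: FF_eq inv_out)
  qed
  have m1: "(\<lambda>\<xi>. Dt (A \<xi>)) \<in> borel_measurable borel"
    by (intro borel_measurable_continuous_onI continuous_on_compose2[OF Dt_cont A_cont]) auto
  show ?thesis unfolding eq
    by (intro measurable_If_set borel_measurable_times Gu_meas m1 borel_measurable_const)
       (simp add: range_f_closed borel_closed)
qed

definition "Phi y = \<bar>det (matrix (gd y))\<bar> *\<^sub>R Hc (gmap y)"

lemma FF_f: "FF (f y) = Phi y"
  unfolding FF_eq Phi_def Hc_def ystar_gmap Dt_def using det_gd_nonneg[of y] by simp

lemma Phi_meas: "Phi \<in> borel_measurable borel"
proof -
  have "Phi = (\<lambda>y. FF (f y))" using FF_f by auto
  thus ?thesis using measurable_compose[OF f_meas FF_meas] by (simp add: o_def)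
qed

lemma RHS_eq: "(\<integral>\<xi>. FF \<xi> \<partial>mu) = (\<integral>y. Phi y \<partial>lborel)"
  unfolding subspace_lebesgue_def
  by (subst integral_distr[OF f_meas_lborel FF_meas]) (simp add: FF_f)

lemma C_minus_range: "C - range gmap \<subseteq> frontier C"
proof -
  have "C - range gmap \<subseteq> C - interior C" using interior_C_gmap by blast
  also have "\<dots> = frontier C" using C_compact
    by (simp add: frontier_def compact_imp_closed closure_closed)
  finally show ?thesis .
qed

lemma neg_diff: "negligible (C - range gmap)"
  using negligible_subset[OF negligible_convex_frontier[OF C_convex] C_minus_range] .

lemma Hc_abs_C: "Hc absolutely_integrable_on C"
proof -
  have m: "(\<lambda>x. indicator C x *\<^sub>R Hc x) \<in> borel_measurable lborel"
    using Hc_int unfolding set_integrable_def by (rule borel_measurable_integrable)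
  show ?thesis using Hc_int m unfolding set_integrable_def
    by (simp add: integrable_completion)
qed

lemma neg1: "negligible {x \<in> C - range gmap. Hc x \<noteq> 0}"
  by (rule negligible_subset[OF neg_diff]) auto

lemma neg2: "negligible {x \<in> range gmap - C. Hc x \<noteq> 0}"
proof -
  have "{x \<in> range gmap - C. Hc x \<noteq> 0} = {}" using gmap_C by auto
  thus ?thesis by (metis negligible_empty)
qed

lemma Hc_abs_range: "Hc absolutely_integrable_on range gmap"
  using Hc_abs_C absolutely_integrable_spike_set_eq[OF neg1 neg2] by simp

lemma Hc_integral_range: "integral (range gmap) Hc = integral C Hc"
  using integral_spike_set[OF neg1 neg2] by simp

lemma LHS_HK: "(LINT y:C|lborel. Hc y) = integral C Hc"
  using set_borel_integral_eq_integral(2)[OF Hc_int] .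

lemma Phi_bochner: assumes "Phi absolutely_integrable_on UNIV"
  shows "(\<integral>y. Phi y \<partial>lborel) = integral UNIV Phi"
proof -
  have "(LINT x:UNIV|lebesgue. Phi x) = integral UNIV Phi"
    by (rule set_lebesgue_integral_eq_integral(2)[OF assms])
  moreover have "(LINT x:UNIV|lebesgue. Phi x) = (\<integral>y. Phi y \<partial>lebesgue)"
    by (simp add: set_lebesgue_integral_def)
  moreover have "(\<integral>y. Phi y \<partial>lebesgue) = (\<integral>y. Phi y \<partial>lborel)"
    using Phi_meas by (simp add: integral_completion)
  ultimately show ?thesis by simp
qed

end


lemma main_wo:
  fixes K :: "'a::euclidean_space set" and V :: "'a set"
    and f :: "real^'m::{finite,wellorder} \<Rightarrow> 'a" and u :: 'a
  assumes "convex_body K" and "curved K"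
    and "linear f" and "\<forall>y. norm (f y) = norm y" and "range f = V"
    and "u \<in> orthogonal_comp V" and "u \<noteq> 0"
  shows "supp_fun (fiber_body f K) u =
    (\<integral>xi. inner u (grad (supp_fun K) (u + xi)) *
          subspace_jacobian f (\<lambda>\<xi>. proj V (grad (supp_fun K) (u + \<xi>))) xi
       \<partial>subspace_lebesgue f)"
proof -
  interpret fb_setting K f u by (rule fb_setting.intro) (use assms in auto)
  define Vh where "Vh = (\<lambda>x. vec (Hc x) :: real^1)"
  have blv: "bounded_linear (vec :: real \<Rightarrow> real^1)"
    by (rule bounded_linear_intro[where K=1]) (auto simp: vec_add vec_scaleR norm_vec_def L2_set_def)
  have bln: "bounded_linear (\<lambda>v :: real^1. v $ 1)" by (rule bounded_linear_vec_nth)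
  have Vh_abs: "Vh absolutely_integrable_on range gmap"
    using absolutely_integrable_linear[OF Hc_abs_range blv] unfolding Vh_def by (simp add: o_def)
  have Hc_intg: "Hc integrable_on range gmap"
    using set_lebesgue_integral_eq_integral(1)[OF Hc_abs_range] .
  have Vh_int: "integral (range gmap) Vh = vec (integral C Hc)"
    using integral_linear[OF Hc_intg blv] Hc_integral_range unfolding Vh_def by (simp add: o_def)
  define Psi where "Psi = (\<lambda>x. \<bar>det (matrix (gd x))\<bar> *\<^sub>R Vh (gmap x))"
  have cov0: "Psi absolutely_integrable_on UNIV \<and> integral UNIV Psi = vec (integral C Hc)"
    using has_absolute_integral_change_of_variables[of UNIV gmap gd Vh "vec (integral C Hc)"]
      gmap_deriv gmap_inj Vh_abs Vh_int
    unfolding Psi_def by (simp add: has_derivative_at_withinI)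
  have PhiPsi: "Phi = (\<lambda>v. v $ 1) \<circ> Psi"
    unfolding Phi_def Psi_def Vh_def by (auto simp: o_def)
  have Phi_abs: "Phi absolutely_integrable_on UNIV"
    unfolding PhiPsi using absolutely_integrable_linear[OF cov0[THEN conjunct1] bln] .
  have Psi_intg: "Psi integrable_on UNIV"
    using set_lebesgue_integral_eq_integral(1)[OF cov0[THEN conjunct1]] .
  have "integral UNIV Phi = integral C Hc"
    unfolding PhiPsi using integral_linear[OF Psi_intg bln] cov0 by simp
  hence cov: "Phi absolutely_integrable_on UNIV \<and> integral UNIV Phi = integral C Hc"
    using Phi_abs by simp
  have "supp_fun (fiber_body f K) u = integral C Hc"
    using LHS_val LHS_val2 LHS_HK by simp
  also have "\<dots> = (\<integral>\<xi>. FF \<xi> \<partial>mu)"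
    using RHS_eq Phi_bochner cov by simp
  finally show ?thesis unfolding FF_def using assms(5) by simp
qed


lemma permutes_UNIV_bij: "p permutes UNIV \<longleftrightarrow> bij p"
  by (simp add: permutes_univ bij_iff)

lemma swapidseq_conj:
  assumes r: "bij r"
  shows "swapidseq n p \<Longrightarrow> swapidseq n (inv r \<circ> p \<circ> r)"
proof (induction rule: swapidseq.induct)
  case id
  have "inv r \<circ> id \<circ> r = id" using r by (simp add: bij_is_inj)
  thus ?case by (metis swapidseq.id id_def)
next
  case (comp_Suc n p a b)
  have ir: "bij (inv r)" using r by (simp add: bij_imp_bij_inv)
  have e1: "Transposition.transpose a b \<circ> r = r \<circ> Transposition.transpose (inv r a) (inv r b)"
    by (rule transpose_comp_eq[OF r])
  have "inv r \<circ> (Transposition.transpose a b \<circ> p) \<circ> r = inv r \<circ> Transposition.transpose a b \<circ> (r \<circ> inv r) \<circ> p \<circ> r"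
    using r by (simp add: fun_eq_iff bij_is_surj surj_f_inv_f)
  also have "\<dots> = inv r \<circ> (Transposition.transpose a b \<circ> r) \<circ> (inv r \<circ> p \<circ> r)"
    by (simp add: o_assoc)
  also have "\<dots> = (inv r \<circ> r) \<circ> Transposition.transpose (inv r a) (inv r b) \<circ> (inv r \<circ> p \<circ> r)"
    unfolding e1 by (simp add: o_assoc)
  also have "\<dots> = Transposition.transpose (inv r a) (inv r b) \<circ> (inv r \<circ> p \<circ> r)"
    using r by (simp add: bij_is_inj)
  finally have eq: "inv r \<circ> (Transposition.transpose a b \<circ> p) \<circ> r = Transposition.transpose (inv r a) (inv r b) \<circ> (inv r \<circ> p \<circ> r)" .
  have "inv r a \<noteq> inv r b" using comp_Suc.hyps(2) ir by (metis bij_inv_eq_iff r)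
  thus ?case unfolding eq by (rule swapidseq.comp_Suc[OF comp_Suc.IH])
qed

lemma sign_conj:
  fixes r :: "'m::finite \<Rightarrow> 'n::finite"
  assumes r: "bij r" and p: "p permutes (UNIV :: 'n set)"
  shows "sign (inv r \<circ> p \<circ> r) = sign p"
proof -
  have "permutation p" using p by (simp add: permutes_imp_permutation)
  then obtain n where n: "swapidseq n p" unfolding permutation_def by blast
  have "evenperm p = even n" using evenperm_unique[OF n] by simp
  moreover have "evenperm (inv r \<circ> p \<circ> r) = even n"
    using evenperm_unique[OF swapidseq_conj[OF r n]] by simp
  ultimately show ?thesis unfolding sign_def by simp
qed

lemma det_reindex:
  fixes M :: "'a::comm_ring_1^'n::finite^'n" and r :: "'m::finite \<Rightarrow> 'n"
  assumes r: "bij r"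
  shows "det (\<chi> i j. M $ r i $ r j) = det M"
proof -
  define h where "h p = inv r \<circ> p \<circ> r" for p :: "'n \<Rightarrow> 'n"
  define h' where "h' q = r \<circ> q \<circ> inv r" for q :: "'m \<Rightarrow> 'm"
  have ir: "bij (inv r)" using r by (simp add: bij_imp_bij_inv)
  have rinv: "r (inv r x) = x" for x using r by (simp add: bij_is_surj surj_f_inv_f)
  have invr: "inv r (r x) = x" for x using r by (simp add: bij_is_inj)
  have bh: "bij_betw h {p. p permutes (UNIV :: 'n set)} {q. q permutes (UNIV :: 'm set)}"
  proof (rule bij_betw_byWitness[where f' = h'])
    show "\<forall>p\<in>{p. p permutes UNIV}. h' (h p) = p" by (auto simp: h_def h'_def fun_eq_iff rinv)
    show "\<forall>q\<in>{q. q permutes UNIV}. h (h' q) = q" by (auto simp: h_def h'_def fun_eq_iff invr)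
    show "h ` {p. p permutes UNIV} \<subseteq> {q. q permutes UNIV}"
      using r ir by (auto simp: h_def permutes_UNIV_bij intro: bij_comp)
    show "h' ` {q. q permutes UNIV} \<subseteq> {p. p permutes UNIV}"
      using r ir by (auto simp: h'_def permutes_UNIV_bij intro: bij_comp)
  qed
  have prod_eq: "(\<Prod>i\<in>UNIV. M $ r i $ r (h p i)) = (\<Prod>j\<in>UNIV. M $ j $ p j)" for p
  proof -
    have "(\<Prod>i\<in>UNIV. M $ r i $ r (h p i)) = (\<Prod>i\<in>UNIV. M $ r i $ p (r i))"
      by (simp add: h_def rinv)
    also have "\<dots> = (\<Prod>j\<in>UNIV. M $ j $ p j)"
      using prod.reindex_bij_betw[of r UNIV UNIV "\<lambda>j. M $ j $ p j"] r by (simp add: bij_betw_def)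
    finally show ?thesis .
  qed
  have "det (\<chi> i j. M $ r i $ r j) =
      (\<Sum>q\<in>{q. q permutes (UNIV :: 'm set)}. of_int (sign q) * (\<Prod>i\<in>UNIV. M $ r i $ r (q i)))"
    unfolding det_def by simp
  also have "\<dots> = (\<Sum>p\<in>{p. p permutes (UNIV :: 'n set)}. of_int (sign (h p)) * (\<Prod>i\<in>UNIV. M $ r i $ r (h p i)))"
    by (rule sum.reindex_bij_betw[OF bh, symmetric])
  also have "\<dots> = (\<Sum>p\<in>{p. p permutes (UNIV :: 'n set)}. of_int (sign p) * (\<Prod>j\<in>UNIV. M $ j $ p j))"
    using prod_eq by (intro sum.cong) (auto simp: h_def sign_conj[OF r] rinv)
  also have "\<dots> = det M" unfolding det_def ..
  finally show ?thesis .
qed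


typedef ('a::finite) wo = "UNIV :: 'a set" by auto

instance wo :: (finite) finite
proof
  show "finite (UNIV :: 'a wo set)"
  proof -
    have "(UNIV :: 'a wo set) = Abs_wo ` (UNIV :: 'a set)"
      by (metis type_definition.Abs_image[OF type_definition_wo])
    moreover have "finite (Abs_wo ` (UNIV :: 'a set))" by (rule finite_imageI) simp
    ultimately show ?thesis by simp
  qed
qed

instantiation wo :: (finite) linorder
begin
definition less_eq_wo :: "'a wo \<Rightarrow> 'a wo \<Rightarrow> bool" where
  "x \<le> y \<longleftrightarrow> to_nat (Rep_wo x) \<le> to_nat (Rep_wo y)"
definition less_wo :: "'a wo \<Rightarrow> 'a wo \<Rightarrow> bool" where
  "x < y \<longleftrightarrow> to_nat (Rep_wo x) < to_nat (Rep_wo y)"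
instance
proof
  fix x y z :: "'a wo"
  show "(x < y) = (x \<le> y \<and> \<not> y \<le> x)" unfolding less_eq_wo_def less_wo_def by auto
  show "x \<le> x" unfolding less_eq_wo_def by simp
  show "x \<le> y \<Longrightarrow> y \<le> z \<Longrightarrow> x \<le> z" unfolding less_eq_wo_def by simp
  show "x \<le> y \<Longrightarrow> y \<le> x \<Longrightarrow> x = y" unfolding less_eq_wo_def
    by (metis Rep_wo_inject inj_eq inj_to_nat order_antisym)
  show "x \<le> y \<or> y \<le> x" unfolding less_eq_wo_def by auto
qed
end

instance wo :: (finite) wellorder
proof
  fix P :: "'a wo \<Rightarrow> bool" and a :: "'a wo"
  assume step: "\<And>x. (\<And>y. y < x \<Longrightarrow> P y) \<Longrightarrow> P x"
  have "\<forall>a. to_nat (Rep_wo a) = n \<longrightarrow> P a" for n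
  proof (induction n rule: less_induct)
    case (less n)
    show ?case
    proof (intro allI impI)
      fix a :: "'a wo" assume "to_nat (Rep_wo a) = n"
      thus "P a" using less step unfolding less_wo_def by blast
    qed
  qed
  thus "P a" by blast
qed

definition Tw :: "real^'n::finite \<Rightarrow> real^('n wo)" where "Tw x = (\<chi> i. x $ Rep_wo i)"
definition Tiw :: "real^('n::finite wo) \<Rightarrow> real^'n" where "Tiw z = (\<chi> j. z $ Abs_wo j)"

lemma Tiw_Tw[simp]: "Tiw (Tw x) = x"
  by (simp add: Tiw_def Tw_def Abs_wo_inverse vec_eq_iff)

lemma Tw_Tiw[simp]: "Tw (Tiw z) = z"
  by (simp add: Tiw_def Tw_def Rep_wo_inverse vec_eq_iff)

lemma bij_Rep_wo: "bij Rep_wo"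
  by (metis Abs_wo_inverse Rep_wo_inverse UNIV_I bij_betw_byWitness subset_UNIV)

lemma Tw_lin: "linear Tw"
  by (rule linearI) (auto simp: Tw_def vec_eq_iff)

lemma Tiw_lin: "linear Tiw"
  by (rule linearI) (auto simp: Tiw_def vec_eq_iff)

lemma inner_Tw: "inner z (Tw v) = inner (Tiw z) v"
proof -
  have "inner z (Tw v) = (\<Sum>i\<in>UNIV. z $ i * v $ Rep_wo i)"
    by (simp add: inner_vec_def Tw_def)
  also have "\<dots> = (\<Sum>j\<in>UNIV. z $ Abs_wo j * v $ j)"
    using sum.reindex_bij_betw[of Rep_wo UNIV UNIV "\<lambda>j. z $ Abs_wo j * v $ j"] bij_Rep_wo
    by (simp add: Rep_wo_inverse)
  also have "\<dots> = inner (Tiw z) v" by (simp add: inner_vec_def Tiw_def)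
  finally show ?thesis .
qed

lemma norm_Tiw: "norm (Tiw z) = norm z"
proof -
  have "inner (Tiw z) (Tiw z) = inner z z" using inner_Tw[of z "Tiw z"] by simp
  thus ?thesis by (simp add: norm_eq_sqrt_inner)
qed

lemma prod_Basis_cart: "(\<Prod>b\<in>(Basis :: (real^'n::finite) set). x \<bullet> b) = (\<Prod>i\<in>UNIV. x $ i)"
proof -
  have B: "(Basis :: (real^'n) set) = (\<lambda>i. axis i 1) ` UNIV"
    by (auto simp: Basis_vec_def)
  have "inj (\<lambda>i::'n. axis i (1::real))" by (auto intro: injI simp: axis_eq_axis)
  thus ?thesis unfolding B by (simp add: prod.reindex inner_axis)
qed

lemma Tiw_meas[measurable]: "Tiw \<in> borel_measurable borel"
  by (intro borel_measurable_continuous_onI linear_continuous_on) (metis Tiw_lin linear_conv_bounded_linear)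

lemma lborel_Tiw: "distr lborel borel (Tiw :: real^('n::finite wo) \<Rightarrow> real^'n) = lborel"
proof (rule lborel_eqI[symmetric])
  fix l u :: "real^'n" assume lu: "\<And>b. b \<in> Basis \<Longrightarrow> l \<bullet> b \<le> u \<bullet> b"
  have lu': "l $ i \<le> u $ i" for i using lu[of "axis i 1"] by (simp add: inner_axis)
  have pre: "Tiw -` box l u = box (Tw l) (Tw u)"
    by (auto simp: mem_box_cart Tiw_def Tw_def)
     (metis Rep_wo_inverse, metis Rep_wo_inverse, metis Abs_wo_inverse UNIV_I, metis Abs_wo_inverse UNIV_I)
  have "emeasure (distr lborel borel Tiw) (box l u) = emeasure lborel (box (Tw l) (Tw u))"
    by (simp add: emeasure_distr pre)
  also have "\<dots> = (\<Prod>b\<in>Basis. (Tw u - Tw l) \<bullet> b)"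
  proof -
    have "\<forall>b\<in>Basis. Tw l \<bullet> b \<le> Tw u \<bullet> b"
      using lu' by (auto simp: Basis_vec_def inner_axis Tw_def)
    thus ?thesis by (simp add: emeasure_lborel_box_eq)
  qed
  also have "\<dots> = (\<Prod>i\<in>UNIV. (u - l) $ Rep_wo i)" by (simp add: prod_Basis_cart Tw_def)
  also have "\<dots> = (\<Prod>j\<in>UNIV. (u - l) $ j)"
  proof -
    have "(\<Prod>i\<in>UNIV. (u - l) $ Rep_wo i) = (\<Prod>j\<in>UNIV. (u - l) $ j)"
      using prod.reindex_bij_betw[of Rep_wo UNIV UNIV "\<lambda>j. (u - l) $ j"] bij_Rep_wo by simp
    thus ?thesis by simp
  qed
  also have "\<dots> = (\<Prod>b\<in>Basis. (u - l) \<bullet> b)" by (simp add: prod_Basis_cart)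
  finally show "emeasure (distr lborel borel Tiw) (box l u) = (\<Prod>b\<in>Basis. (u - l) \<bullet> b)"
    by simp
qed simp


lemma Tiw_axis: "Tiw (axis j (1::real)) = axis (Rep_wo j) 1"
  by (auto simp: Tiw_def axis_def vec_eq_iff Abs_wo_inverse Rep_wo_inverse)

lemma matrix_conj:
  fixes L :: "real^'n::finite \<Rightarrow> real^'n"
  shows "matrix (\<lambda>d. Tw (L (Tiw d))) = (\<chi> i j. matrix L $ Rep_wo i $ Rep_wo j)"
  by (simp add: matrix_def vec_eq_iff Tw_def Tiw_axis)

theorem mainTheorem12:
  fixes K :: "'a::euclidean_space set" and V :: "'a set"
    and f :: "real^'n \<Rightarrow> 'a" and u :: 'a
  assumes "convex_body K" and "curved K"
    and "linear f" and "\<forall>y. norm (f y) = norm y" and "range f = V"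
    and "u \<in> orthogonal_comp V" and "u \<noteq> 0"
  shows "supp_fun (fiber_body f K) u =
    (\<integral>xi. inner u (grad (supp_fun K) (u + xi)) *
          subspace_jacobian f (\<lambda>\<xi>. proj V (grad (supp_fun K) (u + \<xi>))) xi
       \<partial>subspace_lebesgue f)"
proof -
  define f2 :: "real^('n wo) \<Rightarrow> 'a" where "f2 = f \<circ> Tiw"
  have lin2: "linear f2" unfolding f2_def by (rule linear_compose[OF Tiw_lin assms(3)])
  have iso2: "\<forall>y. norm (f2 y) = norm y" using assms(4) by (simp add: f2_def norm_Tiw)
  have rng: "range f2 = range f"
  proof (intro equalityI subsetI)
    fix x assume "x \<in> range f2" thus "x \<in> range f" unfolding f2_def by auto
  next
    fix x assume "x \<in> range f"
    then obtain y where "x = f y" by blast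
    hence "x = f2 (Tw y)" unfolding f2_def by simp
    thus "x \<in> range f2" by blast
  qed
  have fmeas: "f \<in> borel_measurable borel"
    using assms(3) by (intro borel_measurable_continuous_onI linear_continuous_on)
      (metis linear_conv_bounded_linear)
  have mu_eq: "subspace_lebesgue f2 = subspace_lebesgue f"
  proof -
    have "distr lborel borel (f \<circ> Tiw) = distr (distr lborel borel Tiw) borel f"
      by (rule distr_distr[symmetric]) (use fmeas in \<open>simp_all add: measurable_lborel1\<close>)
    thus ?thesis unfolding subspace_lebesgue_def f2_def lborel_Tiw by simp
  qed
  have fb_eq: "fiber_body f2 K = fiber_body f K"
    unfolding fiber_body_def rng mu_eq ..
  note main2 = main_wo[OF assms(1,2) lin2 iso2 rng[unfolded assms(5)] assms(6,7)]
  interpret I1: fb_setting K f u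
    by (rule fb_setting.intro[OF assms(1-4)]) (use assms(5-7) in simp_all)
  interpret I2: fb_setting K f2 u
    by (rule fb_setting.intro[OF assms(1,2) lin2 iso2]) (use assms(5-7) rng in simp_all)
  have FF1: "(\<lambda>xi. inner u (grad (supp_fun K) (u + xi)) *
          subspace_jacobian f (\<lambda>\<xi>. proj V (grad (supp_fun K) (u + \<xi>))) xi) = I1.FF"
    unfolding I1.FF_def assms(5)[symmetric] ..
  have FF2: "(\<lambda>xi. inner u (grad (supp_fun K) (u + xi)) *
          subspace_jacobian f2 (\<lambda>\<xi>. proj V (grad (supp_fun K) (u + \<xi>))) xi) = I2.FF"
    unfolding I2.FF_def assms(5)[symmetric] rng ..
  have adj: "adjoint f2 w = Tw (adjoint f w)" for w
  proof -
    have "inner z (adjoint f2 w - Tw (adjoint f w)) = 0" for z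
    proof -
      have 1: "inner z (adjoint f2 w) = inner (f2 z) w" using I2.inner_f_A[of z w] by simp
      have 2: "inner z (Tw (adjoint f w)) = inner (f (Tiw z)) w"
        using inner_Tw[of z "adjoint f w"] I1.inner_f_A[of "Tiw z" w] by simp
      show ?thesis unfolding inner_diff_right 1 2 by (simp add: f2_def)
    qed
    from this[of "adjoint f2 w - Tw (adjoint f w)"] show ?thesis by simp
  qed
  have DGeq: "I2.DG = I1.DG" unfolding I1.DG_def I2.DG_def ..
  have gd_eq1: "I2.gd (Tw y) d = Tw (I1.gd y (Tiw d))" for y d
  proof -
    have "I2.gd (Tw y) d = Tw (adjoint f (blinfun_apply (I1.DG (u + f2 (Tw y))) (f2 d)))"
      unfolding I2.gd_def adj by (rule refl)
    also have "\<dots> = Tw (I1.gd y (Tiw d))"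
      unfolding I1.gd_def f2_def o_def Tiw_Tw by (rule refl)
    finally show ?thesis .
  qed
  have gd_eq: "I2.gd (Tw y) = (\<lambda>d. Tw (I1.gd y (Tiw d)))" for y
    using gd_eq1 by (rule ext)
  have Dt_eq: "I2.Dt (Tw y) = I1.Dt y" for y
    unfolding I2.Dt_def I1.Dt_def gd_eq matrix_conj by (rule det_reindex[OF bij_Rep_wo])
  have ptw: "I1.FF \<xi> = I2.FF \<xi>" if "\<xi> \<in> range f" for \<xi>
  proof -
    obtain y where y: "\<xi> = f y" using \<open>\<xi> \<in> range f\<close> by blast
    have "f2 (Tw y) = \<xi>" using y by (simp add: f2_def)
    hence "inv f2 \<xi> = Tw y" using I2.inv_f_f[of "Tw y"] by simp
    thus ?thesis unfolding I1.FF_eq I2.FF_eq using y Dt_eq by simp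
  qed
  have AE: "AE \<xi> in subspace_lebesgue f. I1.FF \<xi> = I2.FF \<xi>"
  proof -
    have "AE \<xi> in subspace_lebesgue f. \<xi> \<in> range f"
      unfolding subspace_lebesgue_def
    proof (subst AE_distr_iff)
      show "f \<in> lborel \<rightarrow>\<^sub>M borel" using fmeas by (simp add: measurable_lborel1)
      show "{x \<in> space borel. x \<in> range f} \<in> sets borel"
        using I1.range_f_closed by (simp add: borel_closed)
      show "AE x in lborel. f x \<in> range f" by simp
    qed
    thus ?thesis by eventually_elim (rule ptw)
  qed
  have int_eq: "(\<integral>\<xi>. I1.FF \<xi> \<partial>subspace_lebesgue f) = (\<integral>\<xi>. I2.FF \<xi> \<partial>subspace_lebesgue f)"
    by (rule integral_cong_AE) (use I1.FF_meas I2.FF_meas AE in auto)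
  show ?thesis
    using main2 unfolding FF1 int_eq fb_eq FF2 mu_eq .
qed


end
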